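(* Let $\alpha\in(0,1]$, let $k\in\{0,1,\dots,m-1\}$, and let $\vec r=(r_1,\dots,r_{k+1},0,\dots,0)\in\mathbb R_{\ge0}^m$ with $\sum_{i=1}^{k+1}r_i=1$. Let $\mathcal E=(N,A,\vec\sigma)$ be an election with $m$ alternatives whose profile is moderate-up-to-$k$. Let $a^*$ be any alternative selected by the Positional Scoring Matching rule $\mathrm{PSM}_{\vec r}$ on $\vec\sigma$. Then $$\mathsf{dist}_\alpha(a^*,\mathcal E)\le 2+\max\left(\alpha,\ \max_{j\in[k+1]}\Big(\sum_{i\in[k+1],\,i\ne j} r_i\max(1,\alpha^{j-i})\Big)-r_j\right).$$
   Context: An election $\mathcal E=(N,A,\vec\sigma)$ has $n$ agents $N$, $m$ alternatives $A$, and $\sigma_i=(\pi_i,\Join_i)$ with $\pi_i:[m]\to A$ a bijection ($\pi_i(1)$ most preferred) and $\Join_i:[m-1]\to\{\succ,\succ\!\!\succ\}$. Write $\mathrm{rank}_i(a)=\pi_i^{-1}(a)$ and $a\succ_i c$ if $\mathrm{rank}_i(a)<\mathrm{rank}_i(c)$. A metric $d$ on $N\cup A$ is nonnegative and symmetric, satisfies the triangle inequality, and has $d(x,x)=0$. The profile $\vec\sigma$ is $\alpha$-consistent with $d$ (mandatory elicitation) if for all $i$ and $j\in[m-1]$: - $\Join_i(j)=\,\succ$ implies $d(i,\pi_i(j+1))\ge d(i,\pi_i(j))>\alpha d(i,\pi_i(j+1))$; - $\Join_i(j)=\,\succ\!\!\succ$ implies $d(i,\pi_i(j))\le\alpha d(i,\pi_i(j+1))$.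 $\mathsf{dist}_\alpha(a,\mathcal E)=\sup_d \sum_i d(i,a)/\min_{b}\sum_i d(i,b)$, with the supremum over $\alpha$-consistent $d$. A preference $(\pi,\Join)$ is moderate-up-to-$k$ if $\Join(k+1)=\,\succ\!\!\succ$ and $\Join(i)=\,\succ$ for all $i\in[k]$. A preference with no $\succ\!\!\succ$ is moderate-up-to-$(m-1)$. A profile is moderate-up-to-$k$ if all agents' preferences are. For $\vec p\in\Delta(N)$, $\vec q\in\Delta(A)$ and $a\in A$, the $(\vec p,\vec q)$-domination graph of $a$ is the bipartite graph on $N\cup A$ with an edge $(i,c)$ iff $a\succ_i c$ or $c=a$; agent $i$ has weight $p(i)$ and alternative $c$ has weight $q(c)$. It admits a fractional perfect matching if there are nonnegative edge weights $w$ with $\sum_{c:(i,c)\text{ edge}}w(i,c)=p(i)$ for every $i$ and $\sum_{i:(i,c)\text{ edge}}w(i,c)=q(c)$ for every $c$. The rule $\mathrm{PSM}_{\vec r}$ sets $p(i)=1/n$ and $q(c)=\frac1n\sum_{i\in N}r_{\mathrm{rank}_i(c)}$. It selects an alternative whose $(\vec p,\vec q)$-domination graph admits a fractional perfect matching; such an alternative always exists. *)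

theory Defs
  imports "HOL-Library.Extended_Real"
begin

text \<open>Positions are 1..m with m = card A.
  The preference of agent i is (pref i, J i): pref i j is the alternative at rank j,
  and J i j = True encodes the strong separator (succ-succ) at position j,
  J i j = False the ordinary separator (succ). The metric lives on the disjoint
  union N + A, encoded as the sum type.\<close>

definition is_election :: "'v set \<Rightarrow> 'c set \<Rightarrow> ('v \<Rightarrow> nat \<Rightarrow> 'c) \<Rightarrow> bool" where
  "is_election N A pref \<longleftrightarrow> finite N \<and> N \<noteq> {} \<and> finite A \<and> A \<noteq> {} \<and>
     (\<forall>i\<in>N. bij_betw (pref i) {1..card A} A)"

definition rank :: "'c set \<Rightarrow> ('v \<Rightarrow> nat \<Rightarrow> 'c) \<Rightarrow> 'v \<Rightarrow> 'c \<Rightarrow> nat" where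
  "rank A pref i c = inv_into {1..card A} (pref i) c"

definition prefers :: "'c set \<Rightarrow> ('v \<Rightarrow> nat \<Rightarrow> 'c) \<Rightarrow> 'v \<Rightarrow> 'c \<Rightarrow> 'c \<Rightarrow> bool" where
  "prefers A pref i a c \<longleftrightarrow> rank A pref i a < rank A pref i c"

definition is_metric_on :: "'x set \<Rightarrow> ('x \<Rightarrow> 'x \<Rightarrow> real) \<Rightarrow> bool" where
  "is_metric_on S d \<longleftrightarrow>
     (\<forall>x\<in>S. \<forall>y\<in>S. 0 \<le> d x y \<and> d x y = d y x) \<and>
     (\<forall>x\<in>S. d x x = 0) \<and>
     (\<forall>x\<in>S. \<forall>y\<in>S. \<forall>z\<in>S. d x z \<le> d x y + d y z)"

definition alpha_consistent ::
  "real \<Rightarrow> 'v set \<Rightarrow> 'c set \<Rightarrow> ('v \<Rightarrow> nat \<Rightarrow> 'c) \<Rightarrow> ('v \<Rightarrow> nat \<Rightarrow> bool)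
     \<Rightarrow> ('v + 'c \<Rightarrow> 'v + 'c \<Rightarrow> real) \<Rightarrow> bool" where
  "alpha_consistent \<alpha> N A pref J d \<longleftrightarrow>
     is_metric_on (Inl ` N \<union> Inr ` A) d \<and>
     (\<forall>i\<in>N. \<forall>j\<in>{1..card A - 1}.
        (\<not> J i j \<longrightarrow>
           d (Inl i) (Inr (pref i (j+1))) \<ge> d (Inl i) (Inr (pref i j)) \<and>
           d (Inl i) (Inr (pref i j)) > \<alpha> * d (Inl i) (Inr (pref i (j+1)))) \<and>
        (J i j \<longrightarrow>
           d (Inl i) (Inr (pref i j)) \<le> \<alpha> * d (Inl i) (Inr (pref i (j+1)))))"

definition social_cost :: "'v set \<Rightarrow> ('v + 'c \<Rightarrow> 'v + 'c \<Rightarrow> real) \<Rightarrow> 'c \<Rightarrow> real" where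
  "social_cost N d a = (\<Sum>i\<in>N. d (Inl i) (Inr a))"

text \<open>Distortion as an extended real: the supremum over all alpha-consistent metrics of
  the cost ratio (with ereal division, x/0 = \<infinity> for x > 0).\<close>
definition distortion ::
  "real \<Rightarrow> 'v set \<Rightarrow> 'c set \<Rightarrow> ('v \<Rightarrow> nat \<Rightarrow> 'c) \<Rightarrow> ('v \<Rightarrow> nat \<Rightarrow> bool) \<Rightarrow> 'c \<Rightarrow> ereal" where
  "distortion \<alpha> N A pref J a =
     (SUP d\<in>{d. alpha_consistent \<alpha> N A pref J d}.
        ereal (social_cost N d a) / ereal (Min (social_cost N d ` A)))"

definition moderate_up_to :: "nat \<Rightarrow> nat \<Rightarrow> (nat \<Rightarrow> bool) \<Rightarrow> bool" where
  "moderate_up_to m k Jn \<longleftrightarrow>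
     (k + 1 \<le> m - 1 \<and> Jn (k+1) \<and> (\<forall>i\<in>{1..k}. \<not> Jn i)) \<or>
     (k = m - 1 \<and> (\<forall>i\<in>{1..m-1}. \<not> Jn i))"

definition has_fractional_perfect_matching ::
  "'v set \<Rightarrow> 'c set \<Rightarrow> ('v \<Rightarrow> 'c \<Rightarrow> bool) \<Rightarrow> ('v \<Rightarrow> real) \<Rightarrow> ('c \<Rightarrow> real) \<Rightarrow> bool" where
  "has_fractional_perfect_matching N A E p q \<longleftrightarrow>
     (\<exists>w :: 'v \<Rightarrow> 'c \<Rightarrow> real.
        (\<forall>i\<in>N. \<forall>c\<in>A. E i c \<longrightarrow> 0 \<le> w i c) \<and>
        (\<forall>i\<in>N. (\<Sum>c\<in>{c\<in>A. E i c}. w i c) = p i) \<and>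
        (\<forall>c\<in>A. (\<Sum>i\<in>{i\<in>N. E i c}. w i c) = q c))"

definition domination_edge :: "'c set \<Rightarrow> ('v \<Rightarrow> nat \<Rightarrow> 'c) \<Rightarrow> 'c \<Rightarrow> 'v \<Rightarrow> 'c \<Rightarrow> bool" where
  "domination_edge A pref a i c \<longleftrightarrow> prefers A pref i a c \<or> c = a"

definition psm_selects :: "(nat \<Rightarrow> real) \<Rightarrow> 'v set \<Rightarrow> 'c set \<Rightarrow> ('v \<Rightarrow> nat \<Rightarrow> 'c) \<Rightarrow> 'c \<Rightarrow> bool" where
  "psm_selects r N A pref a \<longleftrightarrow> a \<in> A \<and>
     has_fractional_perfect_matching N A (domination_edge A pref a)
       (\<lambda>i. 1 / real (card N))
       (\<lambda>c. (1 / real (card N)) * (\<Sum>i\<in>N. r (rank A pref i c)))"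

end

theory Submission
  imports Defs
begin

lemma mono_chain:
  fixes D :: "nat \<Rightarrow> real"
  assumes "\<forall>u\<in>{1..m-1}. D u \<le> D (Suc u)" "1 \<le> t" "t \<le> t'" "t' \<le> m"
  shows "D t \<le> D t'"
  using assms(3,4)
proof (induction t' rule: dec_induct)
  case base then show ?case by simp
next
  case (step n)
  then have "D n \<le> D (Suc n)" using assms(1,2) by auto
  with step show ?case by simp
qed

lemma geo_chain:
  fixes D :: "nat \<Rightarrow> real"
  assumes "\<forall>u\<in>{1..k}. \<alpha> * D (Suc u) \<le> D u" "0 < \<alpha>" "1 \<le> s" "s \<le> t" "t \<le> k+1"
  shows "\<alpha>^(t-s) * D t \<le> D s"
  using assms(4,5)
proof (induction t rule: dec_induct)
  case base then show ?case by simp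
next
  case (step n)
  then have h: "\<alpha> * D (Suc n) \<le> D n" using assms(1,3) by auto
  have "\<alpha>^(Suc n - s) * D (Suc n) = \<alpha>^(n-s) * (\<alpha> * D (Suc n))"
    using step(1) by (simp add: Suc_diff_le)
  also have "\<dots> \<le> \<alpha>^(n-s) * D n" using h assms(2) by (simp add: mult_left_mono)
  also have "\<dots> \<le> D s" using step by simp
  finally show ?case .
qed

lemma agent_bound:
  fixes D E r :: "nat \<Rightarrow> real" and \<alpha> X :: real and m k s :: nat
  assumes a0: "0<\<alpha>" and a1: "\<alpha>\<le>1" and m1: "1 \<le> m" and km: "k \<le> m-1" and sm: "s\<in>{1..m}"
   and rnn: "\<forall>i\<in>{1..m}. 0 \<le> r i" and rz: "\<forall>i\<in>{k+2..m}. r i = 0" and r1: "(\<Sum>i=1..k+1. r i) = 1"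
   and Dnn: "\<forall>t\<in>{1..m}. 0 \<le> D t"
   and Dmono: "\<forall>u\<in>{1..m-1}. D u \<le> D (Suc u)"
   and Dgeo: "\<forall>u\<in>{1..k}. \<alpha> * D (Suc u) \<le> D u"
   and Djump: "k+1 < s \<Longrightarrow> D (k+1) \<le> \<alpha> * D (k+2)"
   and Etri: "\<forall>t\<in>{1..m}. E t \<le> D s + D t" and Es: "E s = 0"
   and Xdef: "X = max \<alpha> (MAX j\<in>{1..k+1}. (\<Sum>i\<in>{1..k+1}-{j}. r i * max 1 (\<alpha> powi (int j - int i))) - r j)"
  shows "(\<Sum>t=1..m. r t * E t) \<le> (1+X) * D s"
proof -
  have Ds: "0 \<le> D s" using Dnn sm by auto
  have sub: "{1..k+1} \<subseteq> {1..m}" using km m1 by auto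
  have rall: "(\<Sum>t\<in>{1..m}-{s}. r t) = 1 - r s"
  proof -
    have "(\<Sum>t=1..m. r t) = (\<Sum>t=1..k+1. r t)"
      by (rule sum.mono_neutral_right) (use sub rz in auto)
    then have "(\<Sum>t=1..m. r t) = 1" using r1 by simp
    moreover have "(\<Sum>t=1..m. r t) = r s + (\<Sum>t\<in>{1..m}-{s}. r t)"
      using sm by (simp add: sum.remove)
    ultimately show ?thesis by simp
  qed
  have "(\<Sum>t=1..m. r t * E t) = (\<Sum>t\<in>{1..m}-{s}. r t * E t)"
    using sm Es by (simp add: sum.remove)
  also have "\<dots> \<le> (\<Sum>t\<in>{1..m}-{s}. r t * (D s + D t))"
    by (rule sum_mono) (use Etri rnn in \<open>auto intro: mult_left_mono\<close>)
  also have "\<dots> = (\<Sum>t\<in>{1..m}-{s}. r t) * D s + (\<Sum>t\<in>{1..m}-{s}. r t * D t)"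
    by (simp add: distrib_left sum.distrib sum_distrib_right)
  also have "\<dots> = (1 - r s) * D s + (\<Sum>t\<in>{1..m}-{s}. r t * D t)"
    using rall by simp
  finally have st1: "(\<Sum>t=1..m. r t * E t) \<le> (1 - r s) * D s + (\<Sum>t\<in>{1..m}-{s}. r t * D t)" .
  have st2: "(\<Sum>t\<in>{1..m}-{s}. r t * D t) = (\<Sum>t\<in>{1..k+1}-{s}. r t * D t)"
    by (rule sum.mono_neutral_right) (use sub rz in auto)
  define M where "M j = (\<Sum>i\<in>{1..k+1}-{j}. r i * max 1 (\<alpha> powi (int j - int i))) - r j" for j
  have XM: "\<And>j. j \<in> {1..k+1} \<Longrightarrow> M j \<le> X"
  proof -
    fix j assume j: "j \<in> {1..k+1}"
    have "M j \<le> (MAX j\<in>{1..k+1}. M j)" by (rule Max_ge) (use j in auto)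
    then show "M j \<le> X" unfolding Xdef M_def by simp
  qed
  have Xa: "\<alpha> \<le> X" unfolding Xdef by simp
  have key: "(\<Sum>t\<in>{1..k+1}-{s}. r t * D t) \<le> (r s + X) * D s"
  proof (cases "s \<le> k+1")
    case True
    have "(\<Sum>t\<in>{1..k+1}-{s}. r t * D t) \<le> (\<Sum>t\<in>{1..k+1}-{s}. r t * (max 1 (\<alpha> powi (int s - int t)) * D s))"
    proof (rule sum_mono)
      fix t assume t: "t \<in> {1..k+1}-{s}"
      have "D t \<le> max 1 (\<alpha> powi (int s - int t)) * D s"
      proof (cases "t \<le> s")
        case True
        have "D t \<le> D s" using mono_chain[OF Dmono, of t s] True t sm by auto
        also have "\<dots> \<le> max 1 (\<alpha> powi (int s - int t)) * D s"
          using Ds mult_right_mono[OF max.cobounded1 Ds, of 1 "\<alpha> powi (int s - int t)"] by simp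
        finally show ?thesis .
      next
        case False
        have g: "\<alpha>^(t-s) * D t \<le> D s" using geo_chain[OF Dgeo a0, of s t] False t sm by auto
        have e: "\<alpha> powi (int s - int t) = inverse (\<alpha>^(t-s))"
        proof -
          have h: "int s - int t = - int (t-s)" using False by simp
          show ?thesis by (simp only: h power_int_minus power_int_of_nat)
        qed
        have pa: "0 < \<alpha>^(t-s)" using a0 by simp
        have "D t = inverse (\<alpha>^(t-s)) * (\<alpha>^(t-s) * D t)" using pa a0 by (simp add: mult.assoc[symmetric] inverse_eq_divide)
        also have "\<dots> \<le> inverse (\<alpha>^(t-s)) * D s"
          using g pa by (intro mult_left_mono) auto
        finally have "D t \<le> inverse (\<alpha>^(t-s)) * D s" .
        also have "\<dots> \<le> max 1 (\<alpha> powi (int s - int t)) * D s"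
          using Ds e mult_right_mono[OF max.cobounded2 Ds, of "\<alpha> powi (int s - int t)" 1] by simp
        finally show ?thesis .
      qed
      then show "r t * D t \<le> r t * (max 1 (\<alpha> powi (int s - int t)) * D s)"
        using rnn t sub by (auto intro: mult_left_mono)
    qed
    also have "\<dots> = (M s + r s) * D s"
      unfolding M_def by (simp add: sum_distrib_right mult.assoc)
    also have "\<dots> \<le> (r s + X) * D s"
      using XM[of s] True sm Ds by (auto intro: mult_right_mono)
    finally show ?thesis .
  next
    case False
    then have rs: "r s = 0" using rz sm by auto
    have "(\<Sum>t\<in>{1..k+1}-{s}. r t * D t) = (\<Sum>t\<in>{1..k+1}. r t * D t)"
      using False by (intro sum.cong) auto
    also have "\<dots> \<le> (\<Sum>t\<in>{1..k+1}. r t * D (k+1))"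
    proof (rule sum_mono)
      fix t assume t: "t \<in> {1..k+1}"
      have "D t \<le> D (k+1)" using mono_chain[OF Dmono, of t "k+1"] t km m1 by auto
      then show "r t * D t \<le> r t * D (k+1)" using rnn t sub by (auto intro: mult_left_mono)
    qed
    also have "\<dots> = D (k+1)" using r1 by (simp add: sum_distrib_right[symmetric])
    also have "\<dots> \<le> \<alpha> * D (k+2)" using Djump False by simp
    also have "\<dots> \<le> \<alpha> * D s" using mono_chain[OF Dmono, of "k+2" s] False sm a0 by auto
    also have "\<dots> \<le> X * D s" using Xa Ds by (simp add: mult_right_mono)
    finally show ?thesis using rs by simp
  qed
  show ?thesis using st1 st2 key by (simp add: algebra_simps)
qed


theorem lemma3:
  fixes \<alpha> :: real and k :: nat and r :: "nat \<Rightarrow> real"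
    and N :: "'v set" and A :: "'c set" and pref :: "'v \<Rightarrow> nat \<Rightarrow> 'c"
    and J :: "'v \<Rightarrow> nat \<Rightarrow> bool" and a :: "'c"
  assumes "0 < \<alpha>" and "\<alpha> \<le> 1"
    and "is_election N A pref"
    and "k \<le> card A - 1"
    and "\<forall>i\<in>{1..card A}. 0 \<le> r i"
    and "\<forall>i\<in>{k+2..card A}. r i = 0"
    and "(\<Sum>i=1..k+1. r i) = 1"
    and "\<forall>i\<in>N. moderate_up_to (card A) k (J i)"
    and "psm_selects r N A pref a"
  shows "distortion \<alpha> N A pref J a \<le>
    ereal (2 + max \<alpha>
      (MAX j\<in>{1..k+1}.
         (\<Sum>i\<in>{1..k+1} - {j}. r i * max 1 (\<alpha> powi (int j - int i))) - r j))"
proof -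
  note a0 = assms(1) and a1 = assms(2) and km = assms(4) and rnn = assms(5) and rz = assms(6)
    and r1 = assms(7) and modr = assms(8)
  define X where "X = max \<alpha> (MAX j\<in>{1..k+1}.
         (\<Sum>i\<in>{1..k+1} - {j}. r i * max 1 (\<alpha> powi (int j - int i))) - r j)"
  define m where "m = card A"
  have fN: "finite N" and neN: "N \<noteq> {}" and fA: "finite A" and neA: "A \<noteq> {}"
    and bij: "\<And>i. i \<in> N \<Longrightarrow> bij_betw (pref i) {1..m} A"
    using assms(3) unfolding is_election_def m_def by auto
  have m1: "1 \<le> m" using fA neA unfolding m_def by (simp add: Suc_leI card_gt_0_iff)
  have aA: "a \<in> A" using assms(9) unfolding psm_selects_def by auto
  define E where "E = domination_edge A pref a"
  define n where "n = real (card N)"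
  have n0: "0 < n" using fN neN unfolding n_def by (simp add: card_gt_0_iff)
  obtain w where wnn: "\<forall>i\<in>N. \<forall>c\<in>A. E i c \<longrightarrow> 0 \<le> w i c"
    and wrow: "\<forall>i\<in>N. (\<Sum>c\<in>{c\<in>A. E i c}. w i c) = 1 / n"
    and wcol: "\<forall>c\<in>A. (\<Sum>i\<in>{i\<in>N. E i c}. w i c) = (1 / n) * (\<Sum>i\<in>N. r (rank A pref i c))"
    using assms(9) unfolding psm_selects_def has_fractional_perfect_matching_def E_def n_def
    by blast
  define w' where "w' i c = (if E i c then w i c else 0)" for i c
  have w'nn: "\<And>i c. i \<in> N \<Longrightarrow> c \<in> A \<Longrightarrow> 0 \<le> w' i c" using wnn unfolding w'_def by auto
  have w'row: "\<And>i. i \<in> N \<Longrightarrow> (\<Sum>c\<in>A. w' i c) = 1 / n"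
    using wrow fA unfolding w'_def by (simp add: sum.inter_filter[symmetric])
  have w'col: "\<And>c. c \<in> A \<Longrightarrow> (\<Sum>i\<in>N. w' i c) = (1 / n) * (\<Sum>i\<in>N. r (rank A pref i c))"
    using wcol fN unfolding w'_def by (simp add: sum.inter_filter[symmetric])
  have rk1: "\<And>i c. i \<in> N \<Longrightarrow> c \<in> A \<Longrightarrow> rank A pref i c \<in> {1..m} \<and> pref i (rank A pref i c) = c"
  proof -
    fix i c assume i: "i \<in> N" and c: "c \<in> A"
    have b: "bij_betw (pref i) {1..m} A" using bij i .
    show "rank A pref i c \<in> {1..m} \<and> pref i (rank A pref i c) = c"
      unfolding rank_def m_def[symmetric]
      using b c by (metis bij_betw_def bij_betw_inv_into_left bij_betw_inv_into bij_betw_apply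
          f_inv_into_f)
  qed
  have rk2: "\<And>i t. i \<in> N \<Longrightarrow> t \<in> {1..m} \<Longrightarrow> rank A pref i (pref i t) = t \<and> pref i t \<in> A"
  proof -
    fix i t assume i: "i \<in> N" and t: "t \<in> {1..m}"
    have b: "bij_betw (pref i) {1..m} A" using bij i .
    show "rank A pref i (pref i t) = t \<and> pref i t \<in> A"
      unfolding rank_def m_def[symmetric]
      using b t by (metis bij_betw_def bij_betw_apply inv_into_f_f)
  qed
  have Xa: "\<alpha> \<le> X" unfolding X_def by simp
  have main: "social_cost N d a \<le> (2 + X) * social_cost N d b"
    if cons: "alpha_consistent \<alpha> N A pref J d" and bA: "b \<in> A" for d b
  proof -
    have met: "is_metric_on (Inl ` N \<union> Inr ` A) d"
      and sep: "\<forall>i\<in>N. \<forall>j\<in>{1..m - 1}.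
        (\<not> J i j \<longrightarrow>
           d (Inl i) (Inr (pref i (j+1))) \<ge> d (Inl i) (Inr (pref i j)) \<and>
           d (Inl i) (Inr (pref i j)) > \<alpha> * d (Inl i) (Inr (pref i (j+1)))) \<and>
        (J i j \<longrightarrow>
           d (Inl i) (Inr (pref i j)) \<le> \<alpha> * d (Inl i) (Inr (pref i (j+1))))"
      using cons unfolding alpha_consistent_def m_def by blast+
    define S where "S = Inl ` N \<union> Inr ` A"
    have M: "(\<forall>x\<in>S. \<forall>y\<in>S. 0 \<le> d x y \<and> d x y = d y x) \<and>
     (\<forall>x\<in>S. d x x = 0) \<and>
     (\<forall>x\<in>S. \<forall>y\<in>S. \<forall>z\<in>S. d x z \<le> d x y + d y z)"
      using met unfolding is_metric_on_def S_def .
    have SN: "\<And>i. i \<in> N \<Longrightarrow> Inl i \<in> S" and SA: "\<And>c. c \<in> A \<Longrightarrow> Inr c \<in> S"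
      unfolding S_def by auto
    have dnn: "\<And>x y. x \<in> S \<Longrightarrow> y \<in> S \<Longrightarrow> 0 \<le> d x y"
      using M by blast
    have dsym: "\<And>x y. x \<in> S \<Longrightarrow> y \<in> S \<Longrightarrow> d x y = d y x"
      using M by blast
    have dz: "\<And>x. x \<in> S \<Longrightarrow> d x x = 0"
      using M by blast
    have dtri: "\<And>x y z. x \<in> S \<Longrightarrow> y \<in> S \<Longrightarrow> z \<in> S \<Longrightarrow> d x z \<le> d x y + d y z"
      using M by blast
    define D where "D i t = d (Inl i) (Inr (pref i t))" for i t
    have Dnn: "\<forall>t\<in>{1..m}. 0 \<le> D i t" if i: "i \<in> N" for i
    proof
      fix t assume t: "t \<in> {1..m}"
      have pt: "pref i t \<in> A" using rk2[OF i t] by simp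
      show "0 \<le> D i t" unfolding D_def using dnn[OF SN[OF i] SA[OF pt]] .
    qed
    have Dmono: "\<And>i. i \<in> N \<Longrightarrow> \<forall>u\<in>{1..m-1}. D i u \<le> D i (Suc u)"
    proof (intro ballI)
      fix i u assume i: "i \<in> N" and u: "u \<in> {1..m-1}"
      have nn: "0 \<le> D i (Suc u)" using Dnn[OF i] u by auto
      show "D i u \<le> D i (Suc u)"
      proof (cases "J i u")
        case True
        then have "D i u \<le> \<alpha> * D i (Suc u)" using sep i u unfolding D_def by auto
        also have "\<dots> \<le> D i (Suc u)" using mult_right_mono[OF a1 nn] by simp
        finally show ?thesis .
      next
        case False
        then show ?thesis using sep i u unfolding D_def by auto
      qed
    qed
    have Dgeo: "\<And>i. i \<in> N \<Longrightarrow> \<forall>u\<in>{1..k}. \<alpha> * D i (Suc u) \<le> D i u"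
    proof (intro ballI)
      fix i u assume i: "i \<in> N" and u: "u \<in> {1..k}"
      have nJ: "\<not> J i u" using modr i u unfolding moderate_up_to_def m_def[symmetric] by auto
      have "u \<in> {1..m-1}" using u km unfolding m_def by auto
      then show "\<alpha> * D i (Suc u) \<le> D i u" using sep i nJ unfolding D_def by force
    qed
    have Djump: "\<And>i s. i \<in> N \<Longrightarrow> s \<in> {1..m} \<Longrightarrow> k+1 < s \<Longrightarrow> D i (k+1) \<le> \<alpha> * D i (k+2)"
    proof -
      fix i s assume i: "i \<in> N" and s: "s \<in> {1..m}" and ks: "k+1 < s"
      have "k + 1 \<le> m - 1 \<and> J i (k+1)" using modr i s ks unfolding moderate_up_to_def m_def[symmetric]
        by auto
      then show "D i (k+1) \<le> \<alpha> * D i (k+2)" using sep i unfolding D_def by force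
    qed
    have agent: "(\<Sum>c\<in>A. r (rank A pref i c) * d (Inr b) (Inr c)) \<le> (1+X) * d (Inl i) (Inr b)"
      if i: "i \<in> N" for i
    proof -
      define s where "s = rank A pref i b"
      have s: "s \<in> {1..m}" and ps: "pref i s = b" using rk1[OF i bA] unfolding s_def by auto
      have "(\<Sum>c\<in>A. r (rank A pref i c) * d (Inr b) (Inr c))
          = (\<Sum>t\<in>{1..m}. r (rank A pref i (pref i t)) * d (Inr b) (Inr (pref i t)))"
        by (rule sum.reindex_bij_betw[symmetric, OF bij[OF i]])
      also have "\<dots> = (\<Sum>t=1..m. r t * d (Inr b) (Inr (pref i t)))"
        by (rule sum.cong) (use rk2[OF i] in auto)
      also have "\<dots> \<le> (1+X) * D i s"
      proof (rule agent_bound[OF a0 a1 m1 km[folded m_def] s rnn[folded m_def] rz[folded m_def] r1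
            Dnn[OF i] Dmono[OF i] Dgeo[OF i] Djump[OF i s] _ _ X_def])
        show "\<forall>t\<in>{1..m}. d (Inr b) (Inr (pref i t)) \<le> D i s + D i t"
        proof
          fix t assume t: "t \<in> {1..m}"
          have pt: "pref i t \<in> A" using rk2[OF i t] by simp
          have "d (Inr b) (Inr (pref i t)) \<le> d (Inr b) (Inl i) + d (Inl i) (Inr (pref i t))"
            using dtri[OF SA[OF bA] SN[OF i] SA[OF pt]] .
          also have "d (Inr b) (Inl i) = d (Inl i) (Inr b)" using dsym[OF SA[OF bA] SN[OF i]] .
          finally show "d (Inr b) (Inr (pref i t)) \<le> D i s + D i t" unfolding D_def ps .
        qed
        show "d (Inr b) (Inr (pref i s)) = 0" using dz[OF SA[OF bA]] ps by simp
      qed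
      also have "D i s = d (Inl i) (Inr b)" unfolding D_def ps ..
      finally show ?thesis .
    qed
    have domi: "w' i c * d (Inl i) (Inr a) \<le> w' i c * (d (Inl i) (Inr b) + d (Inr b) (Inr c))"
      if i: "i \<in> N" and c: "c \<in> A" for i c
    proof (cases "E i c")
      case False then show ?thesis unfolding w'_def by simp
    next
      case True
      have "d (Inl i) (Inr a) \<le> d (Inl i) (Inr c)"
      proof (cases "c = a")
        case True then show ?thesis by simp
      next
        case False
        then have lt: "rank A pref i a < rank A pref i c"
          using \<open>E i c\<close> unfolding E_def domination_edge_def prefers_def by auto
        have ra: "rank A pref i a \<in> {1..m}" "pref i (rank A pref i a) = a" using rk1[OF i aA] by auto
        have rc: "rank A pref i c \<in> {1..m}" "pref i (rank A pref i c) = c" using rk1[OF i c] by auto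
        have "D i (rank A pref i a) \<le> D i (rank A pref i c)"
          using mono_chain[OF Dmono[OF i], of "rank A pref i a" "rank A pref i c"] lt ra rc by auto
        then show ?thesis unfolding D_def ra(2) rc(2) .
      qed
      also have "\<dots> \<le> d (Inl i) (Inr b) + d (Inr b) (Inr c)" using dtri[OF SN[OF i] SA[OF bA] SA[OF c]] .
      finally show ?thesis using w'nn[OF i c] by (rule mult_left_mono)
    qed
    have per: "d (Inl i) (Inr a) \<le> d (Inl i) (Inr b) + n * (\<Sum>c\<in>A. w' i c * d (Inr b) (Inr c))"
      if i: "i \<in> N" for i
    proof -
      have "d (Inl i) (Inr a) = n * ((\<Sum>c\<in>A. w' i c) * d (Inl i) (Inr a))"
        using w'row[OF i] n0 by simp
      also have "\<dots> = n * (\<Sum>c\<in>A. w' i c * d (Inl i) (Inr a))" by (simp add: sum_distrib_right)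
      also have "\<dots> \<le> n * (\<Sum>c\<in>A. w' i c * (d (Inl i) (Inr b) + d (Inr b) (Inr c)))"
        by (rule mult_left_mono[OF sum_mono]) (use domi[OF i] n0 in auto)
      also have "\<dots> = n * ((\<Sum>c\<in>A. w' i c) * d (Inl i) (Inr b)) + n * (\<Sum>c\<in>A. w' i c * d (Inr b) (Inr c))"
        by (simp add: distrib_left sum.distrib sum_distrib_right)
      also have "\<dots> = d (Inl i) (Inr b) + n * (\<Sum>c\<in>A. w' i c * d (Inr b) (Inr c))"
        using w'row[OF i] n0 by simp
      finally show ?thesis .
    qed
    have "social_cost N d a \<le> (\<Sum>i\<in>N. d (Inl i) (Inr b) + n * (\<Sum>c\<in>A. w' i c * d (Inr b) (Inr c)))"
      unfolding social_cost_def using per by (rule sum_mono)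
    also have "\<dots> = social_cost N d b + n * (\<Sum>c\<in>A. (\<Sum>i\<in>N. w' i c) * d (Inr b) (Inr c))"
      unfolding social_cost_def
      by (simp add: sum.distrib sum_distrib_left sum_distrib_right sum.swap[of _ N A])
    also have "\<dots> = social_cost N d b + (\<Sum>c\<in>A. (\<Sum>i\<in>N. r (rank A pref i c)) * d (Inr b) (Inr c))"
    proof -
      have "n * (\<Sum>c\<in>A. (\<Sum>i\<in>N. w' i c) * d (Inr b) (Inr c))
          = (\<Sum>c\<in>A. n * (\<Sum>i\<in>N. w' i c) * d (Inr b) (Inr c))"
        by (simp only: sum_distrib_left[of n "\<lambda>c. (\<Sum>i\<in>N. w' i c) * d (Inr b) (Inr c)" A] mult.assoc)
      also have "\<dots> = (\<Sum>c\<in>A. (\<Sum>i\<in>N. r (rank A pref i c)) * d (Inr b) (Inr c))"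
        by (rule sum.cong) (use w'col n0 in auto)
      finally show ?thesis by simp
    qed
    also have "\<dots> = social_cost N d b + (\<Sum>i\<in>N. \<Sum>c\<in>A. r (rank A pref i c) * d (Inr b) (Inr c))"
      by (simp add: sum_distrib_right sum.swap[of _ A N])
    also have "\<dots> \<le> social_cost N d b + (\<Sum>i\<in>N. (1+X) * d (Inl i) (Inr b))"
      using agent by (simp add: sum_mono)
    also have "\<dots> = (2 + X) * social_cost N d b"
      unfolding social_cost_def by (simp add: sum_distrib_left sum.distrib algebra_simps)
    finally show ?thesis .
  qed
  have scnn: "0 \<le> social_cost N d c" if "alpha_consistent \<alpha> N A pref J d" "c \<in> A" for d c
  proof -
    have "is_metric_on (Inl ` N \<union> Inr ` A) d" using that(1) unfolding alpha_consistent_def by (rule conjunct1)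
    then have M1: "\<forall>x\<in>Inl ` N \<union> Inr ` A. \<forall>y\<in>Inl ` N \<union> Inr ` A. 0 \<le> d x y \<and> d x y = d y x"
      unfolding is_metric_on_def by (rule conjunct1)
    show ?thesis unfolding social_cost_def
    proof (rule sum_nonneg)
      fix i assume i: "i \<in> N"
      have "Inl i \<in> Inl ` N \<union> Inr ` A" "Inr c \<in> Inl ` N \<union> Inr ` A" using i that(2) by auto
      then show "0 \<le> d (Inl i) (Inr c)" using M1 by blast
    qed
  qed
  show ?thesis
    unfolding distortion_def X_def[symmetric]
  proof (rule SUP_least)
    fix d assume "d \<in> {d. alpha_consistent \<alpha> N A pref J d}"
    then have cons: "alpha_consistent \<alpha> N A pref J d" by simp
    define Mn where "Mn = Min (social_cost N d ` A)"
    have "Mn \<in> social_cost N d ` A" unfolding Mn_def using fA neA by (intro Min_in) auto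
    then obtain b where bA: "b \<in> A" and Mb: "Mn = social_cost N d b" by auto
    have le: "social_cost N d a \<le> (2 + X) * Mn" using main[OF cons bA] Mb by simp
    have M0: "0 \<le> Mn" using scnn[OF cons bA] Mb by simp
    have a0': "0 \<le> social_cost N d a" using scnn[OF cons aA] .
    have X0: "0 < 2 + X" using Xa a0 by simp
    have "ereal (social_cost N d a) / ereal Mn \<le> ereal (2 + X)"
    proof (cases "Mn = 0")
      case True
      then have "social_cost N d a = 0" using le a0' by simp
      then show ?thesis using True X0 by simp
    next
      case False
      then have "social_cost N d a / Mn \<le> 2 + X" using le M0 by (simp add: divide_le_eq)
      then show ?thesis using False by simp
    qed
    then show "ereal (social_cost N d a) / ereal (Min (social_cost N d ` A)) \<le> ereal (2 + X)"
      unfolding Mn_def .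
  qed
qed

end
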